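(* Let $f:X\to\mathcal G$ be a convex function and $x_0\in\operatorname{dom} f$. Suppose that either (i) $x_0$ solves the set-valued Stampacchia inequality: $f(x_0)=Z$, or for all $x\in\operatorname{dom} f$ with $f(x)\neq f(x_0)$ one has $0\notin f'(x_0,x-x_0)$; or (ii) for all $x\in\operatorname{dom} f$ with $f(x_0)\ne f(x)$ there exists $z^*\in C^-\setminus\{0\}$ such that $-\infty=\varphi_{f,z^*}(x_0)<\varphi_{f,z^*}(x)$ or $0<\varphi'_{f,z^*}(x_0,x-x_0)$. Then $x_0$ is a minimizer of $f$, i.e. $f(x_0)\in\operatorname{Min} f[X]$: for every $x\in X$, $f(x)\supseteq f(x_0)$ implies $f(x)=f(x_0)$.
   Context: $X$ is a real linear space and $Z$ a real locally convex Hausdorff space with topological dual $Z^*$. $C\subseteq Z$ is a closed convex cone with $0\in C$ such that $C^-=\{z^*\in Z^*: z^*(c)\le 0\ \forall c\in C\}$ satisfies $C^-\setminus\{0\}\ne\emptyset$. Let $\mathcal G=\{A\subseteq Z: A=\operatorname{cl}\operatorname{co}(A+C)\}$. For $A,B\in\mathcal G$: $A\oplus B=\operatorname{cl}\{a+b\}$, $tA=\{ta\}$ for $t>0$, $A\ominus B=\{z\in Z: B+\{z\}\subseteq A\}$. $f:X\to\mathcal G$ is convex if $f(tx_1+(1-t)x_2)\supseteq tf(x_1)\oplus(1-t)f(x_2)$ for $t\in(0,1)$; $\operatorname{dom}f=\{x:f(x)\ne\emptyset\}$. $f'(x,u)=\bigcap_{t_0>0}\operatorname{cl}\operatorname{co}\bigcup_{0<t<t_0}\frac1t\big(f(x+tu)\ominus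 f(x)\big)$. On $\overline{\mathbb R}$ use inf-addition $\dot+$ ($(-\infty)\dot+(+\infty)=+\infty$) and $r\ominus s=\inf\{t\in\mathbb R:r\le s\dot+t\}$ ($\inf\emptyset=+\infty$). $\varphi_{f,z^*}(x)=\inf\{-z^*(z):z\in f(x)\}$ ($+\infty$ if $f(x)=\emptyset$), $\varphi'_{f,z^*}(x,u)=\inf_{t>0}\frac1t\big(\varphi_{f,z^*}(x+tu)\ominus\varphi_{f,z^*}(x)\big)$. *)

theory Defs
  imports "HOL-Analysis.Analysis"
begin

text \<open>Z is a real locally convex Hausdorff topological vector space.
  Hausdorffness is given by the type class t2_space; the remaining axioms are
  stated by the following predicate on the type.\<close>
definition lc_tvs :: "('z::{real_vector,t2_space}) itself \<Rightarrow> bool" where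
  "lc_tvs _ \<longleftrightarrow>
     continuous_on UNIV (\<lambda>p::'z \<times> 'z. fst p + snd p) \<and>
     continuous_on UNIV (\<lambda>p::real \<times> 'z. fst p *\<^sub>R snd p) \<and>
     (\<forall>U::'z set. open U \<and> 0 \<in> U \<longrightarrow> (\<exists>V. open V \<and> convex V \<and> 0 \<in> V \<and> V \<subseteq> U))"

definition topdual :: "('z::{real_vector,topological_space} \<Rightarrow> real) set" where
  "topdual = {zs. linear zs \<and> continuous_on UNIV zs}"

definition negpolar :: "'z::{real_vector,topological_space} set \<Rightarrow> ('z \<Rightarrow> real) set" where
  "negpolar C = {zs \<in> topdual. \<forall>c\<in>C. zs c \<le> 0}"

definition setplus :: "'z::real_vector set \<Rightarrow> 'z set \<Rightarrow> 'z set" where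
  "setplus A B = {a + b | a b. a \<in> A \<and> b \<in> B}"

definition Gspace :: "'z::{real_vector,topological_space} set \<Rightarrow> 'z set set" where
  "Gspace C = {A. A = closure (convex hull (setplus A C))}"

definition Gplus :: "'z::{real_vector,topological_space} set \<Rightarrow> 'z set \<Rightarrow> 'z set" where
  "Gplus A B = closure (setplus A B)"

definition Gscale :: "real \<Rightarrow> 'z::real_vector set \<Rightarrow> 'z set" where
  "Gscale t A = (\<lambda>a. t *\<^sub>R a) ` A"

definition Gminus :: "'z::real_vector set \<Rightarrow> 'z set \<Rightarrow> 'z set" where
  "Gminus A B = {z. (\<lambda>b. b + z) ` B \<subseteq> A}"

definition sv_convex :: "('x::real_vector \<Rightarrow> 'z::{real_vector,topological_space} set) \<Rightarrow> bool" where
  "sv_convex f \<longleftrightarrow> (\<forall>x1 x2 t. 0 < t \<and> t < 1 \<longrightarrow>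
      Gplus (Gscale t (f x1)) (Gscale (1 - t) (f x2)) \<subseteq> f (t *\<^sub>R x1 + (1 - t) *\<^sub>R x2))"

definition sv_dom :: "('x \<Rightarrow> 'z set) \<Rightarrow> 'x set" where
  "sv_dom f = {x. f x \<noteq> {}}"

definition sv_dir_deriv ::
  "('x::real_vector \<Rightarrow> 'z::{real_vector,topological_space} set) \<Rightarrow> 'x \<Rightarrow> 'x \<Rightarrow> 'z set" where
  "sv_dir_deriv f x u = (\<Inter>t0\<in>{0<..}.
      closure (convex hull (\<Union>t\<in>{0<..<t0}. Gscale (1 / t) (Gminus (f (x + t *\<^sub>R u)) (f x)))))"

text \<open>Inf-addition on the extended reals: (-inf) + (+inf) = +inf.\<close>
definition inf_add :: "ereal \<Rightarrow> ereal \<Rightarrow> ereal" where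
  "inf_add r s = (if r = \<infinity> \<or> s = \<infinity> then \<infinity> else r + s)"

definition inf_diff :: "ereal \<Rightarrow> ereal \<Rightarrow> ereal" where
  "inf_diff r s = Inf {ereal t | t. r \<le> inf_add s (ereal t)}"

definition scal :: "('x \<Rightarrow> 'z set) \<Rightarrow> ('z \<Rightarrow> real) \<Rightarrow> 'x \<Rightarrow> ereal" where
  "scal f zs x = (if f x = {} then \<infinity> else (INF z\<in>f x. ereal (- zs z)))"

definition scal_dir_deriv ::
  "('x::real_vector \<Rightarrow> 'z set) \<Rightarrow> ('z \<Rightarrow> real) \<Rightarrow> 'x \<Rightarrow> 'x \<Rightarrow> ereal" where
  "scal_dir_deriv f zs x u =
     (INF t\<in>{0::real<..}. ereal (1 / t) * inf_diff (scal f zs (x + t *\<^sub>R u)) (scal f zs x))"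

end

theory Submission
  imports Defs
begin

lemma scal_mono:
  assumes "f x0 \<subseteq> f x" "f x0 \<noteq> {}"
  shows "scal f zs x \<le> scal f zs x0"
proof -
  have "f x \<noteq> {}" using assms by blast
  hence e: "scal f zs x = (INF z\<in>f x. ereal (- zs z))" "scal f zs x0 = (INF z\<in>f x0. ereal (- zs z))"
    using assms(2) unfolding scal_def by simp_all
  show ?thesis unfolding e by (rule INF_superset_mono[OF assms(1)]) (rule order_refl)
qed
lemma inf_diff_le0:
  assumes "r \<le> s" shows "inf_diff r s \<le> 0"
proof -
  have "r \<le> inf_add s (ereal 0)" using assms unfolding inf_add_def by auto
  hence "ereal 0 \<in> {ereal t | t. r \<le> inf_add s (ereal t)}" by blast
  hence "inf_diff r s \<le> ereal 0" unfolding inf_diff_def by (rule Inf_lower)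
  thus ?thesis by (simp add: zero_ereal_def)
qed
lemma deriv_zero:
  fixes f :: "'x::real_vector \<Rightarrow> 'z::{real_vector,t2_space} set"
  assumes fconv: "sv_convex f" and sub: "f x0 \<subseteq> f x"
  shows "0 \<in> sv_dir_deriv f x0 (x - x0)"
  unfolding sv_dir_deriv_def
proof (rule INT_I)
  fix t0 :: real assume "t0 \<in> {0<..}"
  hence t0: "t0 > 0" by auto
  define t where "t = min (t0/2) (1/2)"
  have t: "0 < t" "t < 1" "t < t0" using t0 unfolding t_def by auto
  have eq: "x0 + t *\<^sub>R (x - x0) = t *\<^sub>R x + (1 - t) *\<^sub>R x0"
    by (simp add: algebra_simps)
  have "f x0 \<subseteq> f (x0 + t *\<^sub>R (x - x0))"
  proof
    fix a assume a: "a \<in> f x0"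
    have "a = t *\<^sub>R a + (1 - t) *\<^sub>R a" by (simp add: algebra_simps)
    moreover have "t *\<^sub>R a \<in> Gscale t (f x)" using a sub unfolding Gscale_def by auto
    moreover have "(1 - t) *\<^sub>R a \<in> Gscale (1 - t) (f x0)" using a unfolding Gscale_def by auto
    ultimately have "a \<in> setplus (Gscale t (f x)) (Gscale (1 - t) (f x0))"
      unfolding setplus_def by blast
    hence "a \<in> Gplus (Gscale t (f x)) (Gscale (1 - t) (f x0))"
      unfolding Gplus_def using closure_subset by blast
    thus "a \<in> f (x0 + t *\<^sub>R (x - x0))"
      using fconv t unfolding sv_convex_def eq by blast
  qed
  hence "0 \<in> Gminus (f (x0 + t *\<^sub>R (x - x0))) (f x0)" unfolding Gminus_def by auto
  hence "0 \<in> Gscale (1 / t) (Gminus (f (x0 + t *\<^sub>R (x - x0))) (f x0))"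
    unfolding Gscale_def by force
  hence h: "0 \<in> (\<Union>t\<in>{0<..<t0}. Gscale (1 / t) (Gminus (f (x0 + t *\<^sub>R (x - x0))) (f x0)))"
    using t by auto
  show "0 \<in> closure (convex hull (\<Union>t\<in>{0<..<t0}. Gscale (1 / t) (Gminus (f (x0 + t *\<^sub>R (x - x0))) (f x0))))"
    by (rule subsetD[OF closure_subset], rule hull_inc[OF h])
qed

theorem mainTheorem3:
  fixes f :: "'x::real_vector \<Rightarrow> 'z::{real_vector,t2_space} set"
    and C :: "'z set" and x0 :: 'x
  assumes Z: "lc_tvs TYPE('z)"
    and C_closed: "closed C" and C_convex: "convex C" and C_cone: "cone C" and C0: "0 \<in> C"
    and C_polar: "negpolar C - {\<lambda>_. 0} \<noteq> {}"
    and fG: "\<forall>x. f x \<in> Gspace C"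
    and fconv: "sv_convex f"
    and x0dom: "x0 \<in> sv_dom f"
    and hyp: "(f x0 = UNIV \<or> (\<forall>x\<in>sv_dom f. f x \<noteq> f x0 \<longrightarrow> 0 \<notin> sv_dir_deriv f x0 (x - x0)))
           \<or> (\<forall>x\<in>sv_dom f. f x0 \<noteq> f x \<longrightarrow>
                (\<exists>zs\<in>negpolar C - {\<lambda>_. 0}.
                   (- \<infinity> = scal f zs x0 \<and> scal f zs x0 < scal f zs x)
                   \<or> 0 < scal_dir_deriv f zs x0 (x - x0)))"
  shows "\<forall>x. f x0 \<subseteq> f x \<longrightarrow> f x = f x0"
proof (intro allI impI, rule ccontr)
  fix x assume sub: "f x0 \<subseteq> f x" and ne: "f x \<noteq> f x0"
  have ne0: "f x0 \<noteq> {}" using x0dom unfolding sv_dom_def by auto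
  have xd: "x \<in> sv_dom f" using sub ne0 unfolding sv_dom_def by auto
  show False
  proof (cases "f x0 = UNIV \<or> (\<forall>x\<in>sv_dom f. f x \<noteq> f x0 \<longrightarrow> 0 \<notin> sv_dir_deriv f x0 (x - x0))")
    case True
    then show ?thesis
    proof
      assume "f x0 = UNIV" thus False using sub ne by auto
    next
      assume "\<forall>x\<in>sv_dom f. f x \<noteq> f x0 \<longrightarrow> 0 \<notin> sv_dir_deriv f x0 (x - x0)"
      thus False using deriv_zero[OF fconv sub] xd ne by blast
    qed
  next
    case False
    with hyp obtain zs where
      zs: "(- \<infinity> = scal f zs x0 \<and> scal f zs x0 < scal f zs x)
                   \<or> 0 < scal_dir_deriv f zs x0 (x - x0)"
      using xd ne by metis
    have le: "scal f zs x \<le> scal f zs x0" using scal_mono[of f x0 x, OF sub ne0] .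
    have "scal_dir_deriv f zs x0 (x - x0) \<le> ereal (1 / 1) * inf_diff (scal f zs (x0 + 1 *\<^sub>R (x - x0))) (scal f zs x0)"
      unfolding scal_dir_deriv_def by (rule INF_lower) auto
    also have "\<dots> \<le> 0" using inf_diff_le0[OF le] by simp
    finally show False using zs le by auto
  qed
qed

end
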